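(* Let $n\geq 2$ and $m\geq 1$ be integers, let $K$ be an algebraically closed field, and let $p(x_1,\ldots,x_m)\in K\langle x_1,\ldots,x_m\rangle$ be a polynomial with zero constant term in non-commuting variables. Set $r=\mathrm{ord}(p)$ and suppose that $1<r<n-1$. Then $p(T_n(K))=\{p(u_1,\ldots,u_m): u_1,\ldots,u_m\in T_n(K)\}$ is a dense subset of $T_n(K)^{(r-1)}$ with respect to the Zariski topology.
   Context: $T_n(K)$ denotes the algebra of $n\times n$ upper triangular matrices over $K$. For an integer $t\geq 0$, $T_n(K)^{(t)}$ denotes the set of upper triangular matrices whose $(i,j)$ entries are zero whenever $j-i\leq t$; it is identified with the affine space $K^d$, $d=\frac{(n-r)(n-r+1)}{2}$ when $t=r-1$, via the entries $(i,j)$ with $j-i\geq t+1$, and carries the Zariski topology of that affine space (closed sets are common zero sets of families of commutative polynomials in these coordinates). For a $K$-algebra $\mathcal{A}$ let $\mathcal{T}(\mathcal{A})$ be the set of polynomial identities of $\mathcal{A}$; one has $\mathcal{T}(K)\supset\mathcal{T}(T_2(K))\supset\mathcal{T}(T_3(K))\supset\cdots$, with $T_1(K)=K$. The order $\mathrm{ord}(p)$ of $p$ is the least integer $k\geq 1$ such that $p\in\mathcal{T}(T_k(K))$ but $p\notin\mathcal{T}(T_{k+1}(K))$, and $\mathrm{ord}(p)=0$ if $p\notin\mathcal{T}(K)$. *)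

theory Defs
  imports "Jordan_Normal_Form.Matrix" "HOL-Computational_Algebra.Polynomial"
    "HOL-Library.Poly_Mapping"
begin

definition alg_closed :: "'a::field itself \<Rightarrow> bool" where
  "alg_closed _ \<longleftrightarrow> (\<forall>q :: 'a poly. degree q > 0 \<longrightarrow> (\<exists>x. poly q x = 0))"

definition UT :: "nat \<Rightarrow> 'a::field mat set" where
  "UT n = {A \<in> carrier_mat n n. upper_triangular A}"

definition UT_t :: "nat \<Rightarrow> nat \<Rightarrow> 'a::field mat set" where
  "UT_t n t = {A \<in> carrier_mat n n. \<forall>i<n. \<forall>j<n. j \<le> i + t \<longrightarrow> A $$ (i,j) = 0}"

definition coords :: "nat \<Rightarrow> nat \<Rightarrow> (nat \<times> nat) set" where
  "coords n t = {(i,j). i < n \<and> j < n \<and> i + t + 1 \<le> j}"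

text \<open>Non-commutative polynomials in K<x_0,...,x_(m-1)>: finitely supported
  coefficient functions on words (lists of variable indices < m).\<close>
definition is_ncpoly :: "nat \<Rightarrow> (nat list \<Rightarrow> 'a::field) \<Rightarrow> bool" where
  "is_ncpoly m p \<longleftrightarrow> finite {w. p w \<noteq> 0} \<and> (\<forall>w. p w \<noteq> 0 \<longrightarrow> set w \<subseteq> {..<m})"

definition word_eval :: "nat \<Rightarrow> (nat \<Rightarrow> 'a::field mat) \<Rightarrow> nat list \<Rightarrow> 'a mat" where
  "word_eval n us w = foldr (\<lambda>i M. us i * M) w (1\<^sub>m n)"

definition nc_eval :: "nat \<Rightarrow> (nat list \<Rightarrow> 'a::field) \<Rightarrow> (nat \<Rightarrow> 'a mat) \<Rightarrow> 'a mat" where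
  "nc_eval n p us = mat n n (\<lambda>(i,j). \<Sum>w\<in>{w. p w \<noteq> 0}. p w * word_eval n us w $$ (i,j))"

text \<open>p is a polynomial identity of T_k(K) (T_1(K) = K as 1x1 matrices).\<close>
definition is_PI_UT :: "nat \<Rightarrow> nat \<Rightarrow> (nat list \<Rightarrow> 'a::field) \<Rightarrow> bool" where
  "is_PI_UT m k p \<longleftrightarrow> (\<forall>us. (\<forall>i<m. us i \<in> UT k) \<longrightarrow> nc_eval k p us = 0\<^sub>m k k)"

text \<open>Order of p. (If p is an identity of every T_k, e.g. p = 0, the paper leaves
  ord undefined; we put 0 there, which is excluded by the hypothesis r > 1 anyway.)\<close>
definition ord_p :: "nat \<Rightarrow> (nat list \<Rightarrow> 'a::field) \<Rightarrow> nat" where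
  "ord_p m p = (if \<exists>k\<ge>1. is_PI_UT m k p \<and> \<not> is_PI_UT m (k+1) p
     then (LEAST k. k \<ge> 1 \<and> is_PI_UT m k p \<and> \<not> is_PI_UT m (k+1) p) else 0)"

definition image_UT :: "nat \<Rightarrow> nat \<Rightarrow> (nat list \<Rightarrow> 'a::field) \<Rightarrow> 'a mat set" where
  "image_UT m n p = {nc_eval n p us | us. \<forall>i<m. us i \<in> UT n}"

definition cpoly_in :: "nat \<Rightarrow> nat \<Rightarrow> (((nat \<times> nat) \<Rightarrow>\<^sub>0 nat) \<Rightarrow>\<^sub>0 'a::field) \<Rightarrow> bool" where
  "cpoly_in n t f \<longleftrightarrow> (\<forall>mo \<in> Poly_Mapping.keys f. Poly_Mapping.keys mo \<subseteq> coords n t)"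

definition cpoly_eval :: "(((nat \<times> nat) \<Rightarrow>\<^sub>0 nat) \<Rightarrow>\<^sub>0 'a::field) \<Rightarrow> 'a mat \<Rightarrow> 'a" where
  "cpoly_eval f A = (\<Sum>mo\<in>Poly_Mapping.keys f. Poly_Mapping.lookup f mo * (\<Prod>c\<in>Poly_Mapping.keys mo. A $$ c ^ Poly_Mapping.lookup mo c))"

definition zariski_closed :: "nat \<Rightarrow> nat \<Rightarrow> 'a::field mat set \<Rightarrow> bool" where
  "zariski_closed n t C \<longleftrightarrow> (\<exists>F. (\<forall>f\<in>F. cpoly_in n t f) \<and>
      C = {A \<in> UT_t n t. \<forall>f\<in>F. cpoly_eval f A = (0::'a)})"

definition zariski_dense :: "nat \<Rightarrow> nat \<Rightarrow> 'a::field mat set \<Rightarrow> bool" where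
  "zariski_dense n t S \<longleftrightarrow> S \<subseteq> UT_t n t \<and>
      (\<forall>C. zariski_closed n t C \<and> S \<subseteq> C \<longrightarrow> C = UT_t n t)"

end

theory Submission
  imports Defs
begin


lemma mult_entry:
  assumes "A \<in> carrier_mat n k" "B \<in> carrier_mat k n'" "i < n" "j < n'"
  shows "(A * B) $$ (i,j) = (\<Sum>l<k. A $$ (i,l) * B $$ (l,j))"
  using assms by (auto simp: scalar_prod_def lessThan_atLeast0 intro!: sum.cong)

lemma UT_mult:
  assumes "A \<in> UT n" "B \<in> UT n" shows "A * B \<in> UT n"
proof -
  have c: "A \<in> carrier_mat n n" "B \<in> carrier_mat n n" using assms by (auto simp: UT_def)
  have "(A*B) $$ (i,j) = 0" if "j < i" "i < n" for i j
  proof -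
    have "(A*B) $$ (i,j) = (\<Sum>l<n. A $$ (i,l) * B $$ (l,j))"
      using mult_entry[OF c] that by auto
    also have "\<dots> = 0"
    proof -
      have "\<forall>l\<in>{..<n}. A $$ (i,l) * B $$ (l,j) = 0"
      proof
        fix l assume "l \<in> {..<n}"
        then show "A $$ (i,l) * B $$ (l,j) = 0" using assms that
          by (cases "l < i") (auto simp: UT_def upper_triangular_def)
      qed
      then show ?thesis by (rule sum.neutral)
    qed
    finally show ?thesis .
  qed
  then show ?thesis using c by (auto simp: UT_def upper_triangular_def)
qed

lemma UT_one: "1\<^sub>m n \<in> UT n"
  by (auto simp: UT_def upper_triangular_def)

lemma word_eval_UT:
  assumes "\<forall>i\<in>set w. us i \<in> UT n"
  shows "word_eval n us w \<in> UT n"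
  using assms by (induction w) (auto simp: word_eval_def UT_one UT_mult)

lemma word_eval_cong:
  assumes "\<forall>i\<in>set w. us i = vs i"
  shows "word_eval n us w = word_eval n vs w"
  using assms by (induction w) (auto simp: word_eval_def)

lemma nc_eval_cong:
  assumes "is_ncpoly m p" "\<forall>k<m. us k = vs k"
  shows "nc_eval n p us = nc_eval n p vs"
proof -
  have "word_eval n us w = word_eval n vs w" if "p w \<noteq> 0" for w
    using assms that by (intro word_eval_cong) (auto simp: is_ncpoly_def)
  then show ?thesis unfolding nc_eval_def by (intro eq_matI) auto
qed

definition blk :: "nat \<Rightarrow> nat \<Rightarrow> 'a::field mat \<Rightarrow> 'a mat" where
  "blk s i A = mat s s (\<lambda>(x,y). A $$ (i+x, i+y))"

lemma blk_UT: assumes "A \<in> UT n" "i + s \<le> n" shows "blk s i A \<in> UT s"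
  using assms by (auto simp: UT_def upper_triangular_def blk_def)

lemma blk_one: assumes "i + s \<le> n" shows "blk s i (1\<^sub>m n) = 1\<^sub>m s"
  using assms by (intro eq_matI) (auto simp: blk_def)

lemma blk_mult:
  assumes "A \<in> UT n" "B \<in> UT n" "i + s \<le> n"
  shows "blk s i (A * B) = blk s i A * blk s i B"
proof (rule eq_matI)
  have c: "A \<in> carrier_mat n n" "B \<in> carrier_mat n n" using assms by (auto simp: UT_def)
  have cb: "blk s i A \<in> carrier_mat s s" "blk s i B \<in> carrier_mat s s" by (auto simp: blk_def)
  fix x y assume xy: "x < dim_row (blk s i A * blk s i B)" "y < dim_col (blk s i A * blk s i B)"
  then have xy: "x < s" "y < s" by (auto simp: blk_def)
  let ?f = "\<lambda>l. A $$ (i+x,l) * B $$ (l,i+y)"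
  have "blk s i (A * B) $$ (x,y) = (A*B) $$ (i+x,i+y)" using xy by (simp add: blk_def)
  also have "\<dots> = (\<Sum>l<n. ?f l)" using mult_entry[OF c] xy assms by auto
  also have "\<dots> = (\<Sum>l\<in>{i..<i+s}. ?f l)"
  proof (rule sum.mono_neutral_right)
    show "\<forall>l\<in>{..<n} - {i..<i+s}. ?f l = 0"
    proof
      fix l assume l: "l \<in> {..<n} - {i..<i+s}"
      show "?f l = 0"
      proof (cases "l < i")
        case True then show ?thesis using assms xy by (auto simp: UT_def upper_triangular_def)
      next
        case False then show ?thesis using assms xy l by (auto simp: UT_def upper_triangular_def)
      qed
    qed
  qed (use assms in auto)
  also have "\<dots> = (\<Sum>l<s. ?f (i+l))"
  proof -
    have "(\<Sum>l\<in>{i..<i+s}. ?f l) = (\<Sum>l\<in>{0..<s}. ?f (l+i))"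
      using sum.shift_bounds_nat_ivl[of ?f 0 i s] by (simp add: add.commute)
    then show ?thesis by (simp add: lessThan_atLeast0 add.commute)
  qed
  also have "\<dots> = (blk s i A * blk s i B) $$ (x,y)"
    using mult_entry[OF cb] xy by (simp add: blk_def)
  finally show "blk s i (A * B) $$ (x,y) = (blk s i A * blk s i B) $$ (x,y)" .
qed (auto simp: blk_def)

lemma word_eval_blk:
  assumes "\<forall>k\<in>set w. us k \<in> UT n" "i + s \<le> n"
  shows "blk s i (word_eval n us w) = word_eval s (\<lambda>k. blk s i (us k)) w"
  using assms
proof (induction w)
  case Nil then show ?case by (simp add: word_eval_def blk_one)
next
  case (Cons a w)
  have "word_eval n us (a # w) = us a * word_eval n us w" by (simp add: word_eval_def)
  moreover have "word_eval s (\<lambda>k. blk s i (us k)) (a#w) = blk s i (us a) * word_eval s (\<lambda>k. blk s i (us k)) w"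
    by (simp add: word_eval_def)
  moreover have "word_eval n us w \<in> UT n" using Cons.prems by (intro word_eval_UT) auto
  ultimately show ?case using Cons blk_mult[of "us a" n "word_eval n us w" i s] by auto
qed

lemma nc_eval_blk:
  assumes "is_ncpoly m p" "\<forall>k<m. us k \<in> UT n" "i + s \<le> n" "x < s" "y < s"
  shows "nc_eval n p us $$ (i+x, i+y) = nc_eval s p (\<lambda>k. blk s i (us k)) $$ (x,y)"
proof -
  have "word_eval n us w $$ (i+x,i+y) = word_eval s (\<lambda>k. blk s i (us k)) w $$ (x,y)"
    if "p w \<noteq> 0" for w
  proof -
    have "\<forall>k\<in>set w. us k \<in> UT n" using assms that by (auto simp: is_ncpoly_def)
    then have "blk s i (word_eval n us w) = word_eval s (\<lambda>k. blk s i (us k)) w"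
      using word_eval_blk assms by blast
    then show ?thesis using assms by (metis blk_def case_prod_conv index_mat(1))
  qed
  then show ?thesis using assms by (auto simp: nc_eval_def intro!: sum.cong)
qed

lemma nc_eval_UT:
  assumes "is_ncpoly m p" "\<forall>k<m. us k \<in> UT n"
  shows "nc_eval n p us \<in> UT n"
proof -
  have "nc_eval n p us $$ (x,y) = 0" if "y < x" "x < n" for x y
  proof -
    have "word_eval n us w $$ (x,y) = 0" if "p w \<noteq> 0" for w
    proof -
      have "word_eval n us w \<in> UT n" using assms that \<open>p w \<noteq> 0\<close>
        by (intro word_eval_UT) (auto simp: is_ncpoly_def)
      then show ?thesis using \<open>y < x\<close> \<open>x < n\<close> by (auto simp: UT_def upper_triangular_def)
    qed
    then show ?thesis using that by (auto simp: nc_eval_def)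
  qed
  then show ?thesis by (auto simp: UT_def upper_triangular_def nc_eval_def)
qed

lemma PI_image:
  assumes "is_ncpoly m p" "is_PI_UT m r p" "r \<ge> 1" "r \<le> N" "\<forall>k<m. us k \<in> UT N"
  shows "nc_eval N p us \<in> UT_t N (r - 1)"
proof -
  have "nc_eval N p us $$ (x,y) = 0" if "x < N" "y < N" "y \<le> x + (r - 1)" for x y
  proof (cases "y < x")
    case True then show ?thesis using nc_eval_UT[OF assms(1,5)] that
      by (auto simp: UT_def upper_triangular_def)
  next
    case False
    define i0 where "i0 = min x (N - r)"
    have i0: "i0 + r \<le> N" "i0 \<le> x" "x - i0 < r" "y - i0 < r"
      using that False assms(3,4) by (auto simp: i0_def min_def)
    have "nc_eval N p us $$ (x,y) = nc_eval N p us $$ (i0 + (x-i0), i0 + (y-i0))"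
      using i0 False by simp
    also have "\<dots> = nc_eval r p (\<lambda>k. blk r i0 (us k)) $$ (x-i0, y-i0)"
      by (rule nc_eval_blk[OF assms(1,5) i0(1,3,4)])
    also have "\<dots> = 0"
    proof -
      have "\<forall>k<m. blk r i0 (us k) \<in> UT r" using assms(5) i0 blk_UT by blast
      then have "nc_eval r p (\<lambda>k. blk r i0 (us k)) = 0\<^sub>m r r"
        using assms(2) by (auto simp: is_PI_UT_def)
      then show ?thesis using i0 by simp
    qed
    finally show ?thesis .
  qed
  then show ?thesis by (auto simp: UT_t_def nc_eval_def)
qed

lemma mult_lin_left:
  fixes P :: "'a::field mat"
  assumes "P \<in> carrier_mat n n" "\<forall>w\<in>W. X w \<in> carrier_mat n n"
  shows "P * mat n n (\<lambda>(i,j). \<Sum>w\<in>W. c w * X w $$ (i,j))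
       = mat n n (\<lambda>(i,j). \<Sum>w\<in>W. c w * (P * X w) $$ (i,j))"
proof (rule eq_matI)
  fix i j assume ij: "i < dim_row (mat n n (\<lambda>(i,j). \<Sum>w\<in>W. c w * (P * X w) $$ (i,j)))"
    "j < dim_col (mat n n (\<lambda>(i,j). \<Sum>w\<in>W. c w * (P * X w) $$ (i,j)))"
  then have ij: "i < n" "j < n" by auto
  have "(P * mat n n (\<lambda>(i,j). \<Sum>w\<in>W. c w * X w $$ (i,j))) $$ (i,j)
     = (\<Sum>a<n. P $$ (i,a) * (\<Sum>w\<in>W. c w * X w $$ (a,j)))"
    using ij assms by (subst mult_entry[of _ n n _ n]) auto
  also have "\<dots> = (\<Sum>w\<in>W. c w * (\<Sum>a<n. P $$ (i,a) * X w $$ (a,j)))"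
    apply (simp only: sum_distrib_left)
    apply (rule trans[OF sum.swap])
    apply (intro sum.cong refl)
    apply (rule mult.left_commute)
    done
  also have "\<dots> = (\<Sum>w\<in>W. c w * (P * X w) $$ (i,j))"
    using assms ij by (intro sum.cong refl) (simp add: mult_entry[of _ n n _ n])
  finally show "(P * mat n n (\<lambda>(i,j). \<Sum>w\<in>W. c w * X w $$ (i,j))) $$ (i,j)
     = mat n n (\<lambda>(i,j). \<Sum>w\<in>W. c w * (P * X w) $$ (i,j)) $$ (i,j)" using ij by simp
qed (use assms in auto)

lemma mult_lin_right:
  fixes Q :: "'a::field mat"
  assumes "Q \<in> carrier_mat n n" "\<forall>w\<in>W. X w \<in> carrier_mat n n"
  shows "mat n n (\<lambda>(i,j). \<Sum>w\<in>W. c w * X w $$ (i,j)) * Q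
       = mat n n (\<lambda>(i,j). \<Sum>w\<in>W. c w * (X w * Q) $$ (i,j))"
proof (rule eq_matI)
  fix i j assume ij: "i < dim_row (mat n n (\<lambda>(i,j). \<Sum>w\<in>W. c w * (X w * Q) $$ (i,j)))"
    "j < dim_col (mat n n (\<lambda>(i,j). \<Sum>w\<in>W. c w * (X w * Q) $$ (i,j)))"
  then have ij: "i < n" "j < n" by auto
  have "(mat n n (\<lambda>(i,j). \<Sum>w\<in>W. c w * X w $$ (i,j)) * Q) $$ (i,j)
     = (\<Sum>a<n. (\<Sum>w\<in>W. c w * X w $$ (i,a)) * Q $$ (a,j))"
    using ij assms by (subst mult_entry[of _ n n _ n]) auto
  also have "\<dots> = (\<Sum>w\<in>W. c w * (\<Sum>a<n. X w $$ (i,a) * Q $$ (a,j)))"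
    by (simp add: sum_distrib_left sum_distrib_right mult.assoc sum.swap[of _ W])
  also have "\<dots> = (\<Sum>w\<in>W. c w * (X w * Q) $$ (i,j))"
    using assms ij by (intro sum.cong refl) (simp add: mult_entry[of _ n n _ n])
  finally show "(mat n n (\<lambda>(i,j). \<Sum>w\<in>W. c w * X w $$ (i,j)) * Q) $$ (i,j)
     = mat n n (\<lambda>(i,j). \<Sum>w\<in>W. c w * (X w * Q) $$ (i,j)) $$ (i,j)" using ij by simp
qed (use assms in auto)

lemma word_eval_carrier:
  assumes "\<forall>k\<in>set w. us k \<in> carrier_mat n n"
  shows "word_eval n us w \<in> carrier_mat n n"
  using assms by (induction w) (auto simp: word_eval_def)

lemma word_eval_conj:
  assumes "P \<in> carrier_mat n n" "Q \<in> carrier_mat n n" "P * Q = 1\<^sub>m n" "Q * P = 1\<^sub>m n"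
    "\<forall>k\<in>set w. us k \<in> carrier_mat n n"
  shows "word_eval n (\<lambda>k. P * us k * Q) w = P * word_eval n us w * Q"
  using assms(5)
proof (induction w)
  case Nil then show ?case using assms by (simp add: word_eval_def)
next
  case (Cons a w)
  let ?W = "word_eval n us w"
  have W: "?W \<in> carrier_mat n n" using Cons.prems by (intro word_eval_carrier) auto
  have u: "us a \<in> carrier_mat n n" using Cons.prems by auto
  have "word_eval n (\<lambda>k. P * us k * Q) (a#w) = (P * us a * Q) * (P * ?W * Q)"
    using Cons by (simp add: word_eval_def)
  also have "\<dots> = P * (us a * (Q * (P * (?W * Q))))"
    using assms W u by (simp add: assoc_mult_mat[of _ n n _ n _ n])
  also have "Q * (P * (?W * Q)) = ?W * Q"
  proof -
    have "Q * (P * (?W * Q)) = (Q * P) * (?W * Q)"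
      by (rule assoc_mult_mat[symmetric]) (use assms W in auto)
    also have "\<dots> = ?W * Q" unfolding assms(4) using W assms by (intro left_mult_one_mat) auto
    finally show ?thesis .
  qed
  also have "P * (us a * (?W * Q)) = P * (us a * ?W) * Q"
    using assms W u by (simp add: assoc_mult_mat[of _ n n _ n _ n])
  finally show ?case by (simp add: word_eval_def)
qed

lemma nc_eval_conj:
  assumes "is_ncpoly m p" "\<forall>k<m. us k \<in> carrier_mat n n"
    "P \<in> carrier_mat n n" "Q \<in> carrier_mat n n" "P * Q = 1\<^sub>m n" "Q * P = 1\<^sub>m n"
  shows "nc_eval n p (\<lambda>k. P * us k * Q) = P * nc_eval n p us * Q"
proof -
  let ?W = "{w. p w \<noteq> 0}"
  have wc: "\<forall>w\<in>?W. word_eval n us w \<in> carrier_mat n n"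
    using assms by (auto intro!: word_eval_carrier simp: is_ncpoly_def)
  have wc2: "\<forall>w\<in>?W. P * word_eval n us w \<in> carrier_mat n n"
    using wc assms by auto
  have "P * nc_eval n p us * Q
     = mat n n (\<lambda>(i,j). \<Sum>w\<in>?W. p w * (P * word_eval n us w * Q) $$ (i,j))"
    unfolding nc_eval_def
    by (subst mult_lin_left[OF assms(3) wc], subst mult_lin_right[OF assms(4) wc2]) simp
  also have "\<dots> = nc_eval n p (\<lambda>k. P * us k * Q)"
  proof -
    have "word_eval n (\<lambda>k. P * us k * Q) w = P * word_eval n us w * Q" if "w \<in> ?W" for w
      using assms that by (intro word_eval_conj) (auto simp: is_ncpoly_def)
    then show ?thesis unfolding nc_eval_def by (intro eq_matI) auto
  qed
  finally show ?thesis by simp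
qed



definition pf :: "('a::field \<Rightarrow> 'a) \<Rightarrow> bool" where
  "pf g \<longleftrightarrow> (\<exists>q. \<forall>t. g t = poly q t)"

lemma pf_const: "pf (\<lambda>t. c)"
  unfolding pf_def by (intro exI[of _ "[:c:]"]) simp

lemma pf_id: "pf (\<lambda>t. t)"
  unfolding pf_def by (intro exI[of _ "[:0,1:]"]) simp

lemma pf_add: "pf f \<Longrightarrow> pf g \<Longrightarrow> pf (\<lambda>t. f t + g t)"
  unfolding pf_def by (metis poly_add)

lemma pf_mult: "pf f \<Longrightarrow> pf g \<Longrightarrow> pf (\<lambda>t. f t * g t)"
  unfolding pf_def by (metis poly_mult)

lemma pf_sum: "finite A \<Longrightarrow> (\<And>a. a \<in> A \<Longrightarrow> pf (f a)) \<Longrightarrow> pf (\<lambda>t. \<Sum>a\<in>A. f a t)"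
  by (induction A rule: finite_induct) (auto intro: pf_add pf_const)

lemma pf_prod: "finite A \<Longrightarrow> (\<And>a. a \<in> A \<Longrightarrow> pf (f a)) \<Longrightarrow> pf (\<lambda>t. \<Prod>a\<in>A. f a t)"
  by (induction A rule: finite_induct) (auto intro: pf_mult pf_const)

lemma pf_power: "pf f \<Longrightarrow> pf (\<lambda>t. f t ^ k)"
  by (induction k) (auto intro: pf_mult pf_const)

lemma alg_closed_infinite:
  assumes "alg_closed TYPE('a::field)"
  shows "infinite (UNIV :: 'a set)"
proof
  assume fin: "finite (UNIV :: 'a set)"
  define P :: "'a poly" where "P = (\<Prod>x\<in>UNIV. [: (- x), 1 :])"
  have dP: "degree P = card (UNIV :: 'a set)"
    unfolding P_def by (subst degree_prod_eq_sum_degree) auto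
  have "card (UNIV :: 'a set) > 0" using fin by (simp add: finite_UNIV_card_ge_0)
  then have d: "degree (P + 1) > 0" using dP by (simp add: degree_add_eq_left)
  obtain x where "poly (P + 1) x = 0"
    using assms d unfolding alg_closed_def by blast
  moreover have "poly P x = 0" unfolding P_def poly_prod using fin
    by (intro prod_zero) (auto intro!: bexI[of _ x])
  ultimately show False by simp
qed

lemma pf_common_nonzero:
  assumes "infinite (UNIV :: 'a::field set)" "pf (g :: 'a \<Rightarrow> 'a)" "pf h" "g a \<noteq> 0" "h b \<noteq> 0"
  shows "\<exists>t. g t \<noteq> 0 \<and> h t \<noteq> 0"
proof -
  obtain q1 where q1: "\<forall>t. g t = poly q1 t" using assms(2) by (auto simp: pf_def)
  obtain q2 where q2: "\<forall>t. h t = poly q2 t" using assms(3) by (auto simp: pf_def)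
  have "q1 \<noteq> 0" "q2 \<noteq> 0" using q1 q2 assms(4,5) by auto
  then have "finite ({t. poly q1 t = 0} \<union> {t. poly q2 t = 0})" by (simp add: poly_roots_finite)
  then obtain t where "t \<notin> {t. poly q1 t = 0} \<union> {t. poly q2 t = 0}"
    using assms(1) by (metis ex_new_if_finite)
  then show ?thesis using q1 q2 by auto
qed

lemma pf_zero_extend:
  assumes "infinite (UNIV :: 'a::field set)" "pf (g :: 'a \<Rightarrow> 'a)" "\<forall>t. t \<noteq> 0 \<longrightarrow> g t = 0"
  shows "g t = 0"
proof -
  obtain q where q: "\<forall>t. g t = poly q t" using assms(2) by (auto simp: pf_def)
  have "q = 0"
  proof (rule ccontr)
    assume "q \<noteq> 0"
    then have "finite {t. poly q t = 0}" by (rule poly_roots_finite)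
    moreover have "- {0} \<subseteq> {t. poly q t = 0}" using q assms(3) by auto
    ultimately have "finite (- {0::'a})" by (rule finite_subset[rotated])
    then show False using assms(1) by simp
  qed
  then show ?thesis using q by simp
qed



definition upd :: "nat \<Rightarrow> (nat \<Rightarrow> 'a::field mat) \<Rightarrow> nat \<Rightarrow> nat \<Rightarrow> nat \<Rightarrow> 'a \<Rightarrow> (nat \<Rightarrow> 'a mat)" where
  "upd n us k a b t = us(k := mat n n (\<lambda>(x,y). if x = a \<and> y = b then t else us k $$ (x,y)))"

definition pfm :: "nat \<Rightarrow> ('a::field \<Rightarrow> 'a mat) \<Rightarrow> bool" where
  "pfm n M \<longleftrightarrow> (\<forall>t. M t \<in> carrier_mat n n) \<and> (\<forall>i<n. \<forall>j<n. pf (\<lambda>t. M t $$ (i,j)))"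

lemma pfm_const: "A \<in> carrier_mat n n \<Longrightarrow> pfm n (\<lambda>t. A)"
  by (auto simp: pfm_def pf_const)

lemma pfm_mult: assumes "pfm n M" "pfm n M'" shows "pfm n (\<lambda>t. M t * M' t)"
proof -
  have "pf (\<lambda>t. (M t * M' t) $$ (i,j))" if "i < n" "j < n" for i j
  proof -
    have "(\<lambda>t. (M t * M' t) $$ (i,j)) = (\<lambda>t. \<Sum>l<n. M t $$ (i,l) * M' t $$ (l,j))"
      using assms that by (auto simp: pfm_def intro!: mult_entry)
    moreover have "pf (\<lambda>t. \<Sum>l<n. M t $$ (i,l) * M' t $$ (l,j))"
      using assms that by (intro pf_sum pf_mult) (auto simp: pfm_def)
    ultimately show ?thesis by simp
  qed
  then show ?thesis using assms by (auto simp: pfm_def intro!: mult_carrier_mat)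
qed

lemma pfm_entry: "A \<in> carrier_mat n n \<Longrightarrow>
  pfm n (\<lambda>t. mat n n (\<lambda>(x,y). if x = a \<and> y = b then t else A $$ (x,y)))"
proof -
  have "pf (\<lambda>t. if i = a \<and> j = b then t else A $$ (i, j))" for i j
    by (cases "i = a \<and> j = b") (auto simp: pf_const pf_id)
  then show ?thesis by (auto simp: pfm_def)
qed

lemma pfm_word_eval:
  assumes "\<forall>c\<in>set w. us c \<in> carrier_mat n n"
  shows "pfm n (\<lambda>t. word_eval n (upd n us k a b t) w)"
  using assms
proof (induction w)
  case Nil then show ?case by (simp add: word_eval_def pfm_const)
next
  case (Cons c w)
  have e: "(\<lambda>t. word_eval n (upd n us k a b t) (c#w)) = (\<lambda>t. upd n us k a b t c * word_eval n (upd n us k a b t) w)"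
    by (simp add: word_eval_def)
  have "pfm n (\<lambda>t. upd n us k a b t c)"
    using Cons.prems by (cases "c = k") (auto simp: upd_def pfm_entry pfm_const)
  then show ?case unfolding e using Cons by (intro pfm_mult) auto
qed

lemma pf_nc_eval_entry:
  assumes "is_ncpoly m p" "\<forall>c<m. us c \<in> carrier_mat n n" "i < n" "j < n"
  shows "pf (\<lambda>t. nc_eval n p (upd n us k a b t) $$ (i,j))"
proof -
  have "pf (\<lambda>t. \<Sum>w\<in>{w. p w \<noteq> 0}. p w * word_eval n (upd n us k a b t) w $$ (i,j))"
  proof (intro pf_sum pf_mult pf_const)
    show "finite {w. p w \<noteq> 0}" using assms by (simp add: is_ncpoly_def)
    fix w assume "w \<in> {w. p w \<noteq> 0}"
    then have "\<forall>c\<in>set w. us c \<in> carrier_mat n n" using assms by (auto simp: is_ncpoly_def)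
    then show "pf (\<lambda>t. word_eval n (upd n us k a b t) w $$ (i,j))"
      using pfm_word_eval[of w us n k a b] assms by (auto simp: pfm_def)
  qed
  then show ?thesis using assms by (simp add: nc_eval_def)
qed

definition GG :: "nat \<Rightarrow> nat \<Rightarrow> (nat \<Rightarrow> 'a::field mat) set" where
  "GG m n = {us. (\<forall>k<m. us k \<in> UT n) \<and> (\<forall>k. m \<le> k \<longrightarrow> us k = 0\<^sub>m n n)}"

definition cpf :: "nat \<Rightarrow> nat \<Rightarrow> ((nat \<Rightarrow> 'a::field mat) \<Rightarrow> 'a) \<Rightarrow> bool" where
  "cpf m n g \<longleftrightarrow> (\<forall>us\<in>GG m n. \<forall>k<m. \<forall>a b. a \<le> b \<longrightarrow> b < n \<longrightarrow> pf (\<lambda>t. g (upd n us k a b t)))"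

definition Dset :: "nat \<Rightarrow> nat \<Rightarrow> (nat \<Rightarrow> 'a::field mat) \<Rightarrow> (nat \<Rightarrow> 'a mat) \<Rightarrow> (nat \<times> nat \<times> nat) set" where
  "Dset m n x y = {(k,a,b). k < m \<and> a < n \<and> b < n \<and> x k $$ (a,b) \<noteq> y k $$ (a,b)}"

lemma Dset_finite: "finite (Dset m n x y)"
proof -
  have "Dset m n x y \<subseteq> {..<m} \<times> {..<n} \<times> {..<n}" by (auto simp: Dset_def)
  then show ?thesis by (rule finite_subset) auto
qed

lemma upd_same: "us k \<in> carrier_mat n n \<Longrightarrow> a < n \<Longrightarrow> b < n \<Longrightarrow> upd n us k a b (us k $$ (a,b)) = us"
  by (auto simp: upd_def intro!: ext eq_matI)

lemma upd_GG: "us \<in> GG m n \<Longrightarrow> k < m \<Longrightarrow> a \<le> b \<Longrightarrow> b < n \<Longrightarrow> upd n us k a b t \<in> GG m n"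
  by (auto simp: GG_def upd_def UT_def upper_triangular_def)

lemma Dset_upd: "k < m \<Longrightarrow> Dset m n (upd n x k a b t) (upd n y k a b t) = Dset m n x y - {(k,a,b)}"
  by (auto simp: Dset_def upd_def split: if_splits)

lemma Dset_empty: "x \<in> GG m n \<Longrightarrow> y \<in> GG m n \<Longrightarrow> Dset m n x y = {} \<Longrightarrow> x = y"
  by (rule ext, simp add: GG_def Dset_def UT_def) (metis eq_matI carrier_matD not_le)

lemma path_lemma:
  assumes inf: "infinite (UNIV :: 'a::field set)" and g: "cpf m n (g :: _ \<Rightarrow> 'a)" and h: "cpf m n h"
  shows "x \<in> GG m n \<Longrightarrow> y \<in> GG m n \<Longrightarrow> g x \<noteq> 0 \<Longrightarrow> h y \<noteq> 0 \<Longrightarrow> \<exists>z\<in>GG m n. g z \<noteq> 0 \<and> h z \<noteq> 0"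
proof (induction "card (Dset m n x y)" arbitrary: x y rule: less_induct)
  case less
  show ?case
  proof (cases "Dset m n x y = {}")
    case True then show ?thesis using less Dset_empty by metis
  next
    case False
    then obtain k a b where kab: "(k,a,b) \<in> Dset m n x y" by auto
    then have kab': "k < m" "a < n" "b < n" "x k $$ (a,b) \<noteq> y k $$ (a,b)" by (auto simp: Dset_def)
    have ab: "a \<le> b"
    proof (rule ccontr)
      assume "\<not> a \<le> b"
      then have "x k \<in> UT n" "y k \<in> UT n" "b < a" using kab' less.prems(1,2) by (auto simp: GG_def)
      then have "x k $$ (a,b) = 0" "y k $$ (a,b) = 0" using kab' by (auto simp: UT_def upper_triangular_def)
      then show False using kab' by simp
    qed
    have cx: "x k \<in> carrier_mat n n" "y k \<in> carrier_mat n n" using less.prems kab' by (auto simp: GG_def UT_def)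
    have pg: "pf (\<lambda>t. g (upd n x k a b t))" using g less.prems kab' ab by (auto simp: cpf_def)
    have ph: "pf (\<lambda>t. h (upd n y k a b t))" using h less.prems kab' ab by (auto simp: cpf_def)
    have "g (upd n x k a b (x k $$ (a,b))) \<noteq> 0" using upd_same[of x k n a b] cx kab' less.prems by simp
    moreover have "h (upd n y k a b (y k $$ (a,b))) \<noteq> 0" using upd_same[of y k n a b] cx kab' less.prems by simp
    ultimately obtain t where t: "g (upd n x k a b t) \<noteq> 0" "h (upd n y k a b t) \<noteq> 0"
      using pf_common_nonzero[OF inf pg ph] by blast
    have "card (Dset m n (upd n x k a b t) (upd n y k a b t)) < card (Dset m n x y)"
      unfolding Dset_upd[OF kab'(1)] by (rule card_Diff1_less[OF Dset_finite kab])
    moreover have "upd n x k a b t \<in> GG m n" "upd n y k a b t \<in> GG m n"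
      using upd_GG less.prems kab' ab by auto
    ultimately show ?thesis using less.hyps t by blast
  qed
qed

lemma cpf_prod: fixes L :: nat shows "(\<And>i. i < L \<Longrightarrow> cpf m n (F i)) \<Longrightarrow> cpf m n (\<lambda>us. \<Prod>i<L. F i us)"
  unfolding cpf_def by (auto intro!: pf_prod simp: finite_lessThan)

lemma generic_point:
  fixes L :: nat
  assumes inf: "infinite (UNIV :: 'a::field set)"
    and F: "\<And>i. i < L \<Longrightarrow> cpf m n (F i :: _ \<Rightarrow> 'a)"
    and W: "\<And>i. i < L \<Longrightarrow> \<exists>x\<in>GG m n. F i x \<noteq> 0"
  shows "\<exists>z\<in>GG m n. \<forall>i<L. F i z \<noteq> 0"
  using F W
proof (induction L)
  case 0
  have "(\<lambda>k. 0\<^sub>m n n) \<in> (GG m n :: (nat \<Rightarrow> 'a mat) set)"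
    by (auto simp: GG_def UT_def upper_triangular_def)
  then show ?case by auto
next
  case (Suc L)
  obtain x where x: "x \<in> GG m n" "\<forall>i<L. F i x \<noteq> 0" using Suc by auto
  obtain y where y: "y \<in> GG m n" "F L y \<noteq> 0" using Suc.prems by blast
  have "cpf m n (\<lambda>us. \<Prod>i<L. F i us)" using Suc.prems by (intro cpf_prod) auto
  moreover have "(\<Prod>i<L. F i x) \<noteq> 0" using x by simp
  ultimately obtain z where "z \<in> GG m n" "(\<Prod>i<L. F i z) \<noteq> 0" "F L z \<noteq> 0"
    using path_lemma[OF inf _ Suc.prems(1)[of L]] x y by blast
  then show ?case by (auto simp: less_Suc_eq)
qed



definition emat :: "nat \<Rightarrow> nat \<Rightarrow> nat \<Rightarrow> 'a::field \<Rightarrow> 'a mat" where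
  "emat n a b s = mat n n (\<lambda>(x,y). (if x = y then 1 else 0) + (if x = a \<and> y = b then s else 0))"

lemma emat_left:
  assumes "M \<in> carrier_mat n n" "x < n" "y < n" "a < n" "b < n"
  shows "(emat n a b s * M) $$ (x,y) = M $$ (x,y) + (if x = a then s * M $$ (b,y) else 0)"
proof -
  have "(emat n a b s * M) $$ (x,y) = (\<Sum>l<n. ((if x = l then 1 else 0) + (if x = a \<and> l = b then s else 0)) * M $$ (l,y))"
    using assms by (subst mult_entry[of _ n n _ n]) (auto simp: emat_def intro!: sum.cong)
  also have "\<dots> = (\<Sum>l<n. (if x = l then M $$ (l,y) else 0)) + (\<Sum>l<n. (if x = a \<and> l = b then s * M $$ (l,y) else 0))"
    by (subst sum.distrib[symmetric]) (intro sum.cong, auto simp: algebra_simps)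
  also have "\<dots> = M $$ (x,y) + (if x = a then s * M $$ (b,y) else 0)"
    using assms by (simp add: sum.delta)
  finally show ?thesis .
qed

lemma emat_right:
  assumes "M \<in> carrier_mat n n" "x < n" "y < n" "a < n" "b < n"
  shows "(M * emat n a b s) $$ (x,y) = M $$ (x,y) + (if y = b then s * M $$ (x,a) else 0)"
proof -
  have "(M * emat n a b s) $$ (x,y) = (\<Sum>l<n. M $$ (x,l) * ((if l = y then 1 else 0) + (if l = a \<and> y = b then s else 0)))"
    using assms by (subst mult_entry[of _ n n _ n]) (auto simp: emat_def intro!: sum.cong)
  also have "\<dots> = (\<Sum>l<n. (if l = y then M $$ (x,l) else 0)) + (\<Sum>l<n. (if l = a \<and> y = b then s * M $$ (x,l) else 0))"
    by (subst sum.distrib[symmetric]) (intro sum.cong, auto simp: algebra_simps)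
  also have "\<dots> = M $$ (x,y) + (if y = b then s * M $$ (x,a) else 0)"
    using assms by (simp add: sum.delta')
  finally show ?thesis .
qed

lemma emat_carrier: "emat n a b s \<in> carrier_mat n n" by (simp add: emat_def)

lemma emat_UT: "a < b \<Longrightarrow> emat n a b s \<in> UT n"
  by (auto simp: UT_def upper_triangular_def emat_def)

lemma emat_inv: assumes "a < n" "b < n" "a \<noteq> b" shows "emat n a b s * emat n a b (-s) = 1\<^sub>m n"
proof (rule eq_matI)
  fix x y assume "x < dim_row (1\<^sub>m n :: 'a mat)" "y < dim_col (1\<^sub>m n :: 'a mat)"
  then have xy: "x < n" "y < n" by auto
  show "(emat n a b s * emat n a b (-s)) $$ (x,y) = (1\<^sub>m n :: 'a mat) $$ (x,y)"
    using emat_left[OF emat_carrier xy assms(1,2), of s a b "-s"] xy assms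
    by (auto simp: emat_def)
qed (auto simp: emat_def)

definition cj :: "nat \<Rightarrow> 'a::field mat \<Rightarrow> 'a mat \<Rightarrow> bool" where
  "cj n A B \<longleftrightarrow> (\<exists>P Q. P \<in> UT n \<and> Q \<in> UT n \<and> P * Q = 1\<^sub>m n \<and> Q * P = 1\<^sub>m n \<and> B = P * A * Q)"

lemma cj_refl: "A \<in> carrier_mat n n \<Longrightarrow> cj n A A"
  unfolding cj_def by (intro exI[of _ "1\<^sub>m n"]) (auto simp: UT_one)

lemma cj_sym: assumes "A \<in> carrier_mat n n" "cj n A B" shows "cj n B A"
proof -
  obtain P Q where PQ: "P \<in> UT n" "Q \<in> UT n" "P * Q = 1\<^sub>m n" "Q * P = 1\<^sub>m n" "B = P * A * Q"
    using assms by (auto simp: cj_def)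
  have c: "P \<in> carrier_mat n n" "Q \<in> carrier_mat n n" using PQ by (auto simp: UT_def)
  have "Q * B * P = (Q * P) * A * (Q * P)" using c assms PQ(5)
    by (simp add: assoc_mult_mat[of _ n n _ n _ n])
  also have "\<dots> = A" using PQ assms by simp
  finally show ?thesis unfolding cj_def using PQ by blast
qed

lemma cj_trans: assumes "A \<in> carrier_mat n n" "cj n A B" "cj n B C" shows "cj n A C"
proof -
  obtain P Q where PQ: "P \<in> UT n" "Q \<in> UT n" "P * Q = 1\<^sub>m n" "Q * P = 1\<^sub>m n" "B = P * A * Q"
    using assms by (auto simp: cj_def)
  obtain P' Q' where PQ': "P' \<in> UT n" "Q' \<in> UT n" "P' * Q' = 1\<^sub>m n" "Q' * P' = 1\<^sub>m n" "C = P' * B * Q'"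
    using assms by (auto simp: cj_def)
  have c: "P \<in> carrier_mat n n" "Q \<in> carrier_mat n n" "P' \<in> carrier_mat n n" "Q' \<in> carrier_mat n n"
    using PQ PQ' by (auto simp: UT_def)
  have "C = (P' * P) * A * (Q * Q')" using c assms PQ(5) PQ'(5)
    by (simp add: assoc_mult_mat[of _ n n _ n _ n])
  moreover have "(P' * P) * (Q * Q') = 1\<^sub>m n"
  proof -
    have "(P' * P) * (Q * Q') = P' * (P * Q) * Q'" using c by (simp add: assoc_mult_mat[of _ n n _ n _ n])
    then show ?thesis using PQ PQ' c by simp
  qed
  moreover have "(Q * Q') * (P' * P) = 1\<^sub>m n"
  proof -
    have "(Q * Q') * (P' * P) = Q * (Q' * P') * P" using c by (simp add: assoc_mult_mat[of _ n n _ n _ n])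
    then show ?thesis using PQ PQ' c by simp
  qed
  ultimately show ?thesis unfolding cj_def using PQ PQ' UT_mult by blast
qed

definition econj :: "nat \<Rightarrow> nat \<Rightarrow> nat \<Rightarrow> 'a::field \<Rightarrow> 'a mat \<Rightarrow> 'a mat" where
  "econj n a b s A = mat n n (\<lambda>(x,y). A $$ (x,y) + (if x = a then s * A $$ (b,y) else 0)
      - (if y = b then s * A $$ (x,a) else 0))"

lemma cj_econj:
  assumes "A \<in> UT n" "a < b" "b < n"
  shows "cj n A (econj n a b s A)"
proof -
  have cA: "A \<in> carrier_mat n n" using assms by (auto simp: UT_def)
  have Aba: "A $$ (b,a) = 0" using assms by (auto simp: UT_def upper_triangular_def)
  have "econj n a b s A = emat n a b s * A * emat n a b (-s)"
  proof (rule eq_matI)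
    fix x y assume "x < dim_row (emat n a b s * A * emat n a b (-s))" "y < dim_col (emat n a b s * A * emat n a b (-s))"
    then have xy: "x < n" "y < n" by (auto simp: emat_def)
    have c1: "emat n a b s * A \<in> carrier_mat n n" using mult_carrier_mat[OF emat_carrier cA] .
    show "econj n a b s A $$ (x,y) = (emat n a b s * A * emat n a b (-s)) $$ (x,y)"
      using emat_right[of "emat n a b s * A" n x y a b "-s"] emat_left[of A n x y a b s]
        emat_left[of A n x a a b s] c1 cA xy assms Aba
      by (auto simp: econj_def algebra_simps)
  qed (auto simp: econj_def emat_def)
  moreover have "emat n a b (-s) * emat n a b s = 1\<^sub>m n"
    using emat_inv[of a n b "-s"] assms by simp
  moreover have "emat n a b s * emat n a b (-s) = 1\<^sub>m n"
    using emat_inv[of a n b s] assms by simp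
  ultimately show ?thesis unfolding cj_def using emat_UT assms by blast
qed



definition dmat :: "nat \<Rightarrow> (nat \<Rightarrow> 'a::field) \<Rightarrow> 'a mat" where
  "dmat n d = mat n n (\<lambda>(x,y). if x = y then d x else 0)"

lemma dmat_left:
  assumes "M \<in> carrier_mat n n" "x < n" "y < n"
  shows "(dmat n d * M) $$ (x,y) = d x * M $$ (x,y)"
proof -
  have "(dmat n d * M) $$ (x,y) = (\<Sum>l<n. (if x = l then d x else 0) * M $$ (l,y))"
    using assms by (subst mult_entry[of _ n n _ n]) (auto simp: dmat_def intro!: sum.cong)
  also have "\<dots> = (\<Sum>l<n. (if x = l then d x * M $$ (l,y) else 0))" by (intro sum.cong) auto
  also have "\<dots> = d x * M $$ (x,y)" using assms by (simp add: sum.delta)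
  finally show ?thesis .
qed

lemma dmat_right:
  assumes "M \<in> carrier_mat n n" "x < n" "y < n"
  shows "(M * dmat n d) $$ (x,y) = M $$ (x,y) * d y"
proof -
  have "(M * dmat n d) $$ (x,y) = (\<Sum>l<n. M $$ (x, l) * (if l = y then d l else 0))"
    using assms by (subst mult_entry[of _ n n _ n]) (auto simp: dmat_def intro!: sum.cong)
  also have "\<dots> = (\<Sum>l<n. (if l = y then M $$ (x,l) * d y else 0))" by (intro sum.cong) auto
  also have "\<dots> = M $$ (x,y) * d y" using assms by (simp add: sum.delta')
  finally show ?thesis .
qed

lemma dmat_carrier: "dmat n d \<in> carrier_mat n n" by (simp add: dmat_def)
lemma dmat_UT: "dmat n d \<in> UT n" by (auto simp: dmat_def UT_def upper_triangular_def)

lemma dmat_inv: assumes "\<forall>x<n. d x \<noteq> 0"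
  shows "dmat n d * dmat n (\<lambda>x. 1 / d x) = 1\<^sub>m n"
proof (rule eq_matI)
  fix x y assume "x < dim_row (1\<^sub>m n :: 'a mat)" "y < dim_col (1\<^sub>m n :: 'a mat)"
  then have xy: "x < n" "y < n" by auto
  show "(dmat n d * dmat n (\<lambda>x. 1 / d x)) $$ (x,y) = (1\<^sub>m n :: 'a mat) $$ (x,y)"
    using dmat_left[OF dmat_carrier xy, of d "\<lambda>x. 1 / d x"] xy assms by (auto simp: dmat_def)
qed (auto simp: dmat_def)

lemma cj_dconj:
  assumes "A \<in> carrier_mat n n" "\<forall>x<n. d x \<noteq> 0"
  shows "cj n A (mat n n (\<lambda>(x,y). d x * A $$ (x,y) / d y))"
proof -
  have "mat n n (\<lambda>(x,y). d x * A $$ (x,y) / d y) = dmat n d * A * dmat n (\<lambda>x. 1 / d x)"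
  proof (rule eq_matI)
    fix x y assume "x < dim_row (dmat n d * A * dmat n (\<lambda>x. 1 / d x))" "y < dim_col (dmat n d * A * dmat n (\<lambda>x. 1 / d x))"
    then have xy: "x < n" "y < n" by (auto simp: dmat_def)
    have c1: "dmat n d * A \<in> carrier_mat n n" using mult_carrier_mat[OF dmat_carrier assms(1)] .
    show "mat n n (\<lambda>(x,y). d x * A $$ (x,y) / d y) $$ (x,y) = (dmat n d * A * dmat n (\<lambda>x. 1 / d x)) $$ (x,y)"
      using dmat_right[OF c1 xy, of "\<lambda>x. 1 / d x"] dmat_left[OF assms(1) xy, of d] xy
      by simp
  qed (auto simp: dmat_def)
  moreover have "dmat n d * dmat n (\<lambda>x. 1 / d x) = 1\<^sub>m n" using dmat_inv assms by blast
  moreover have "dmat n (\<lambda>x. 1 / d x) * dmat n d = 1\<^sub>m n"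
    using dmat_inv[of n "\<lambda>x. 1 / d x"] assms by simp
  ultimately show ?thesis unfolding cj_def using dmat_UT by blast
qed

definition Nset :: "nat \<Rightarrow> nat \<Rightarrow> 'a::field mat set" where
  "Nset n r = {A \<in> UT_t n (r - 1). \<forall>i. i + r < n \<longrightarrow> A $$ (i, i + r) \<noteq> 0}"

definition Zoff :: "nat \<Rightarrow> nat \<Rightarrow> 'a::field mat \<Rightarrow> nat \<Rightarrow> bool" where
  "Zoff n r A \<delta> \<longleftrightarrow> (\<forall>x y. x < n \<longrightarrow> y < n \<longrightarrow> x + r < y \<longrightarrow> y < x + r + \<delta> \<longrightarrow> A $$ (x,y) = 0)"

lemma UT_t_UT: "r \<ge> 1 \<Longrightarrow> A \<in> UT_t n (r - 1) \<Longrightarrow> A \<in> UT n"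
  by (auto simp: UT_t_def UT_def upper_triangular_def)

lemma UT_tD: "A \<in> UT_t n t \<Longrightarrow> x < n \<Longrightarrow> y < n \<Longrightarrow> y \<le> x + t \<Longrightarrow> A $$ (x,y) = 0"
  by (auto simp: UT_t_def)

lemma econj_idx: "x < n \<Longrightarrow> y < n \<Longrightarrow> econj n a b s A $$ (x,y) =
   A $$ (x,y) + (if x = a then s * A $$ (b,y) else 0) - (if y = b then s * A $$ (x,a) else 0)"
  by (simp add: econj_def)

lemma econj_carrier: "econj n a b s A \<in> carrier_mat n n" by (simp add: econj_def)

lemma elim_step:
  assumes r1: "r \<ge> 1" and d1: "\<delta> \<ge> 1" and AN: "A \<in> Nset n r" and Z: "Zoff n r A \<delta>"
    and R: "\<forall>x. k < x \<longrightarrow> x + r + \<delta> < n \<longrightarrow> A $$ (x, x+r+\<delta>) = 0" and kn: "k + r + \<delta> < n"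
  defines "s \<equiv> - A $$ (k, k+r+\<delta>) / A $$ (k+\<delta>, k+\<delta>+r)"
  defines "A' \<equiv> econj n k (k+\<delta>) s A"
  shows "cj n A A' \<and> A' \<in> Nset n r \<and> Zoff n r A' \<delta> \<and>
     (\<forall>x. k \<le> x \<longrightarrow> x + r + \<delta> < n \<longrightarrow> A' $$ (x, x+r+\<delta>) = 0)"
proof (intro conjI)
  have AU: "A \<in> UT_t n (r - 1)" using AN by (simp add: Nset_def)
  have Ad: "\<And>i. i + r < n \<Longrightarrow> A $$ (i, i + r) \<noteq> 0" using AN by (simp add: Nset_def)
  have Z0: "\<And>x y. x < n \<Longrightarrow> y < n \<Longrightarrow> y \<le> x + (r - 1) \<Longrightarrow> A $$ (x,y) = 0"
    using UT_tD[OF AU] by blast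
  have ZZ: "\<And>x y. x < n \<Longrightarrow> y < n \<Longrightarrow> x + r < y \<Longrightarrow> y < x + r + \<delta> \<Longrightarrow> A $$ (x,y) = 0"
    using Z by (simp add: Zoff_def)
  have kd: "k + \<delta> < n" using kn by simp
  show "cj n A A'" unfolding A'_def
    by (rule cj_econj[OF UT_t_UT[OF r1 AU]]) (use d1 kd in auto)
  have cA': "A' \<in> carrier_mat n n" by (simp add: A'_def econj_carrier)
  have A'i: "\<And>x y. x < n \<Longrightarrow> y < n \<Longrightarrow> A' $$ (x,y) =
     A $$ (x,y) + (if x = k then s * A $$ (k+\<delta>,y) else 0) - (if y = k+\<delta> then s * A $$ (x,k) else 0)"
    unfolding A'_def by (rule econj_idx)
  have UT': "A' \<in> UT_t n (r - 1)"
  proof -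
    have "A' $$ (x,y) = 0" if xy: "x < n" "y < n" "y \<le> x + (r - 1)" for x y
    proof -
      have "A $$ (x,y) = 0" using Z0 xy by blast
      moreover have "x = k \<Longrightarrow> A $$ (k+\<delta>,y) = 0" using Z0[of "k+\<delta>" y] xy kd by simp
      moreover have "y = k+\<delta> \<Longrightarrow> A $$ (x,k) = 0" using Z0[of x k] xy kd by simp
      ultimately show ?thesis using A'i[OF xy(1,2)] by simp
    qed
    then show ?thesis using cA' by (auto simp: UT_t_def)
  qed
  show "A' \<in> Nset n r"
  proof -
    have "A' $$ (i, i+r) \<noteq> 0" if i: "i + r < n" for i
    proof -
      have "i = k \<Longrightarrow> A $$ (k+\<delta>,k+r) = 0" using Z0[of "k+\<delta>" "k+r"] i kd d1 by simp
      moreover have "i + r = k+\<delta> \<Longrightarrow> A $$ (i,k) = 0" using Z0[of i k] i kd d1 by simp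
      ultimately show ?thesis using A'i[of i "i+r"] i Ad[OF i] by auto
    qed
    then show ?thesis using UT' by (simp add: Nset_def)
  qed
  show "Zoff n r A' \<delta>"
  proof -
    have "A' $$ (x,y) = 0" if xy: "x < n" "y < n" "x + r < y" "y < x + r + \<delta>" for x y
    proof -
      have "A $$ (x,y) = 0" using ZZ xy by blast
      moreover have "x = k \<Longrightarrow> A $$ (k+\<delta>,y) = 0" using Z0[of "k+\<delta>" y] xy kd by simp
      moreover have "y = k+\<delta> \<Longrightarrow> A $$ (x,k) = 0" using Z0[of x k] xy kd by simp
      ultimately show ?thesis using A'i[OF xy(1,2)] by simp
    qed
    then show ?thesis by (simp add: Zoff_def)
  qed
  show "\<forall>x. k \<le> x \<longrightarrow> x + r + \<delta> < n \<longrightarrow> A' $$ (x, x+r+\<delta>) = 0"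
  proof (intro allI impI)
    fix x assume x: "k \<le> x" "x + r + \<delta> < n"
    show "A' $$ (x, x+r+\<delta>) = 0"
    proof (cases "x = k")
      case True
      have nz: "A $$ (k+\<delta>, k+\<delta>+r) \<noteq> 0" using Ad[of "k+\<delta>"] kn by (simp add: add_ac)
      have "A' $$ (k, k+r+\<delta>) = A $$ (k, k+r+\<delta>) + s * A $$ (k+\<delta>, k+r+\<delta>)"
        using A'i[of k "k+r+\<delta>"] kn r1 by simp
      also have "\<dots> = 0" using nz unfolding s_def by (simp add: add_ac)
      finally show ?thesis using True by simp
    next
      case False
      then have "A $$ (x, x+r+\<delta>) = 0" using R x by auto
      then show ?thesis using A'i[of x "x+r+\<delta>"] x False r1 by auto
    qed
  qed
qed



lemma elim_row:
  assumes r1: "r \<ge> 1" and d1: "\<delta> \<ge> 1"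
  shows "\<forall>A. A \<in> Nset n r \<and> Zoff n r A \<delta> \<and> (\<forall>x. k \<le> x \<longrightarrow> x + r + \<delta> < n \<longrightarrow> A $$ (x, x+r+\<delta>) = 0)
    \<longrightarrow> (\<exists>A'. cj n A A' \<and> A' \<in> Nset n r \<and> Zoff n r A' (\<delta> + 1))"
proof (induction k)
  case 0
  show ?case
  proof (intro allI impI, elim conjE)
    fix A :: "'a mat" assume A: "A \<in> Nset n r" "Zoff n r A \<delta>" "\<forall>x. 0 \<le> x \<longrightarrow> x + r + \<delta> < n \<longrightarrow> A $$ (x, x+r+\<delta>) = 0"
    have "Zoff n r A (\<delta> + 1)"
      unfolding Zoff_def
    proof (intro allI impI)
      fix x y assume xy: "x < n" "y < n" "x + r < y" "y < x + r + (\<delta> + 1)"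
      show "A $$ (x,y) = 0"
      proof (cases "y = x + r + \<delta>")
        case True then show ?thesis using A(3) xy by auto
      next
        case False then show ?thesis using A(2) xy by (auto simp: Zoff_def)
      qed
    qed
    moreover have "A \<in> carrier_mat n n" using A by (auto simp: Nset_def UT_t_def)
    ultimately show "\<exists>A'. cj n A A' \<and> A' \<in> Nset n r \<and> Zoff n r A' (\<delta> + 1)"
      using A cj_refl by blast
  qed
next
  case (Suc k)
  show ?case
  proof (intro allI impI, elim conjE)
    fix A :: "'a mat" assume A: "A \<in> Nset n r" "Zoff n r A \<delta>" "\<forall>x. Suc k \<le> x \<longrightarrow> x + r + \<delta> < n \<longrightarrow> A $$ (x, x+r+\<delta>) = 0"
    have cA: "A \<in> carrier_mat n n" using A by (auto simp: Nset_def UT_t_def)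
    show "\<exists>A'. cj n A A' \<and> A' \<in> Nset n r \<and> Zoff n r A' (\<delta> + 1)"
    proof (cases "k + r + \<delta> < n")
      case True
      define s where "s = - A $$ (k, k+r+\<delta>) / A $$ (k+\<delta>, k+\<delta>+r)"
      define A1 where "A1 = econj n k (k+\<delta>) s A"
      have R: "\<forall>x. k < x \<longrightarrow> x + r + \<delta> < n \<longrightarrow> A $$ (x, x+r+\<delta>) = 0" using A(3) by auto
      have st: "cj n A A1 \<and> A1 \<in> Nset n r \<and> Zoff n r A1 \<delta> \<and>
         (\<forall>x. k \<le> x \<longrightarrow> x + r + \<delta> < n \<longrightarrow> A1 $$ (x, x+r+\<delta>) = 0)"
        unfolding A1_def s_def by (rule elim_step[OF r1 d1 A(1,2) R True])
      then obtain A' where A': "cj n A1 A'" "A' \<in> Nset n r" "Zoff n r A' (\<delta> + 1)"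
        using Suc.IH by blast
      have "cj n A A'" using cj_trans[OF cA] st A'(1) by blast
      then show ?thesis using A' by blast
    next
      case False
      have "\<forall>x. k \<le> x \<longrightarrow> x + r + \<delta> < n \<longrightarrow> A $$ (x, x+r+\<delta>) = 0"
      proof (intro allI impI)
        fix x assume "k \<le> x" "x + r + \<delta> < n"
        then have "Suc k \<le> x" using False by (cases "x = k") auto
        then show "A $$ (x, x+r+\<delta>) = 0" using A(3) \<open>x + r + \<delta> < n\<close> by blast
      qed
      then show ?thesis using Suc.IH A by blast
    qed
  qed
qed

lemma elim_all:
  assumes r1: "r \<ge> 1"
  shows "\<delta> \<ge> 1 \<Longrightarrow> A \<in> Nset n r \<Longrightarrow> Zoff n r A \<delta> \<Longrightarrow> \<exists>A'. cj n A A' \<and> A' \<in> Nset n r \<and> Zoff n r A' n"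
proof (induction "n - \<delta>" arbitrary: \<delta> A rule: less_induct)
  case less
  have cA: "A \<in> carrier_mat n n" using less by (auto simp: Nset_def UT_t_def)
  show ?case
  proof (cases "n \<le> \<delta>")
    case True
    have "Zoff n r A n" using less.prems(3) True by (auto simp: Zoff_def)
    then show ?thesis using cj_refl[OF cA] less.prems by blast
  next
    case False
    have "\<forall>x. n \<le> x \<longrightarrow> x + r + \<delta> < n \<longrightarrow> A $$ (x, x+r+\<delta>) = 0" by auto
    then obtain A1 where A1: "cj n A A1" "A1 \<in> Nset n r" "Zoff n r A1 (\<delta> + 1)"
      using elim_row[OF r1 less.prems(1), of n n] less.prems by blast
    have lt: "n - (\<delta> + 1) < n - \<delta>" using False by simp
    obtain A' where A': "cj n A1 A'" "A' \<in> Nset n r" "Zoff n r A' n"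
      using less.hyps[OF lt _ A1(2) A1(3)] by auto
    show ?thesis using cj_trans[OF cA A1(1) A'(1)] A' by blast
  qed
qed

function dd :: "nat \<Rightarrow> nat \<Rightarrow> 'a::field mat \<Rightarrow> nat \<Rightarrow> 'a" where
  "dd n r A x = (if r > 0 \<and> x + r < n then dd n r A (x + r) / A $$ (x, x + r) else 1)"
  by auto
termination by (relation "measure (\<lambda>(n,r,A,x). n - x)") auto

lemma dd_nz: "A \<in> Nset n r \<Longrightarrow> dd n r A x \<noteq> 0"
proof (induction n r A x rule: dd.induct)
  case (1 n r A x)
  then show ?case by (subst dd.simps) (auto simp: Nset_def)
qed

definition Jr :: "nat \<Rightarrow> nat \<Rightarrow> 'a::field mat" where
  "Jr n r = mat n n (\<lambda>(x,y). if y = x + r then 1 else 0)"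

lemma cj_Jr:
  assumes r1: "r \<ge> 1" and A: "A \<in> Nset n r"
  shows "cj n A (Jr n r)"
proof -
  have Z1: "Zoff n r A 1" by (auto simp: Zoff_def)
  obtain A' where A': "cj n A A'" "A' \<in> Nset n r" "Zoff n r A' n"
    using elim_all[OF r1 _ A Z1] by auto
  have cA: "A \<in> carrier_mat n n" using A by (auto simp: Nset_def UT_t_def)
  have cA': "A' \<in> carrier_mat n n" using A' by (auto simp: Nset_def UT_t_def)
  let ?d = "dd n r A'"
  have dnz: "\<forall>x<n. ?d x \<noteq> 0" using dd_nz[OF A'(2)] by blast
  have "mat n n (\<lambda>(x,y). ?d x * A' $$ (x,y) / ?d y) = Jr n r"
  proof (rule eq_matI)
    fix x y assume "x < dim_row (Jr n r :: 'a mat)" "y < dim_col (Jr n r :: 'a mat)"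
    then have xy: "x < n" "y < n" by (auto simp: Jr_def)
    show "mat n n (\<lambda>(x,y). ?d x * A' $$ (x,y) / ?d y) $$ (x,y) = Jr n r $$ (x,y)"
    proof (cases "y = x + r")
      case True
      have nz: "A' $$ (x, x+r) \<noteq> 0" using A'(2) True xy by (auto simp: Nset_def)
      have "?d x = ?d (x + r) / A' $$ (x, x + r)" using True xy r1 by (subst dd.simps) auto
      then show ?thesis using True xy nz dd_nz[OF A'(2), of "x+r"] by (simp add: Jr_def)
    next
      case False
      have "A' $$ (x,y) = 0"
      proof (cases "y < x + r")
        case True then show ?thesis using A'(2) xy by (auto simp: Nset_def UT_t_def)
      next
        case F2: False then show ?thesis using A'(3) xy False by (auto simp: Zoff_def)
      qed
      then show ?thesis using False xy by (simp add: Jr_def)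
    qed
  qed (auto simp: Jr_def)
  then have "cj n A' (Jr n r)" using cj_dconj[OF cA' dnz] by simp
  then show ?thesis using cj_trans[OF cA A'(1)] by blast
qed



lemma ord_facts:
  assumes "r = ord_p m p" "r \<noteq> 0"
  shows "is_PI_UT m r p \<and> \<not> is_PI_UT m (r + 1) p"
proof -
  have ex: "\<exists>k\<ge>1. is_PI_UT m k p \<and> \<not> is_PI_UT m (k+1) p"
  proof (rule ccontr)
    assume neg: "\<not> (\<exists>k\<ge>1. is_PI_UT m k p \<and> \<not> is_PI_UT m (k+1) p)"
    have "ord_p m p = 0" unfolding ord_p_def using neg by (rule if_not_P)
    then show False using assms by simp
  qed
  then have "r = (LEAST k. k \<ge> 1 \<and> is_PI_UT m k p \<and> \<not> is_PI_UT m (k+1) p)"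
    using assms by (simp add: ord_p_def)
  moreover have "(LEAST k. k \<ge> 1 \<and> is_PI_UT m k p \<and> \<not> is_PI_UT m (k+1) p) \<ge> 1 \<and>
      is_PI_UT m (LEAST k. k \<ge> 1 \<and> is_PI_UT m k p \<and> \<not> is_PI_UT m (k+1) p) p \<and>
      \<not> is_PI_UT m ((LEAST k. k \<ge> 1 \<and> is_PI_UT m k p \<and> \<not> is_PI_UT m (k+1) p) + 1) p"
    using ex by (rule LeastI_ex)
  ultimately show ?thesis by simp
qed

definition emb :: "nat \<Rightarrow> nat \<Rightarrow> nat \<Rightarrow> 'a::field mat \<Rightarrow> 'a mat" where
  "emb n s i A = mat n n (\<lambda>(x,y). if i \<le> x \<and> x < i + s \<and> i \<le> y \<and> y < i + s then A $$ (x - i, y - i) else 0)"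

lemma emb_UT: "A \<in> UT s \<Longrightarrow> emb n s i A \<in> UT n"
  by (auto simp: emb_def UT_def upper_triangular_def)

lemma blk_emb: "A \<in> carrier_mat s s \<Longrightarrow> i + s \<le> n \<Longrightarrow> blk s i (emb n s i A) = A"
  by (intro eq_matI) (auto simp: blk_def emb_def)

lemma nonzero_entry:
  assumes "M \<in> carrier_mat N N" "M \<noteq> 0\<^sub>m N N"
  shows "\<exists>x y. x < N \<and> y < N \<and> M $$ (x,y) \<noteq> 0"
proof (rule ccontr)
  assume "\<not> ?thesis"
  then have "M = 0\<^sub>m N N" using assms by (intro eq_matI) auto
  then show False using assms by simp
qed

lemma setE_pf:
  assumes "cpoly_in n t f" "A \<in> carrier_mat n n" "a < n" "b < n"
  shows "pf (\<lambda>s. cpoly_eval f (mat n n (\<lambda>(x,y). if x = a \<and> y = b then s else A $$ (x,y))))"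
proof -
  let ?M = "\<lambda>s. mat n n (\<lambda>(x,y). if x = a \<and> y = b then s else A $$ (x,y))"
  have entry: "pf (\<lambda>s. ?M s $$ c)" if "c \<in> coords n t" for c
  proof -
    obtain x y where c0: "c = (x,y)" by (cases c)
    then have c: "c = (x,y)" "x < n" "y < n" using that by (auto simp: coords_def)
    show ?thesis
    proof (cases "x = a \<and> y = b")
      case True then show ?thesis using c by (simp add: pf_id)
    next
      case False
      then have "(\<lambda>s. ?M s $$ c) = (\<lambda>s. A $$ (x,y))" using c by auto
      then show ?thesis by (simp add: pf_const)
    qed
  qed
  show ?thesis unfolding cpoly_eval_def
  proof (intro pf_sum pf_mult pf_const pf_prod pf_power)
    fix mo c assume "mo \<in> Poly_Mapping.keys f" "c \<in> Poly_Mapping.keys mo"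
    then have "c \<in> coords n t" using assms(1) by (auto simp: cpoly_in_def)
    then show "pf (\<lambda>s. ?M s $$ c)" by (rule entry)
  qed auto
qed



theorem theorem1p5:
  fixes p :: "nat list \<Rightarrow> 'a::field" and n m r :: nat
  assumes "alg_closed TYPE('a)"
    and "n \<ge> 2" and "m \<ge> 1"
    and "is_ncpoly m p"
    and "p [] = 0"
    and "r = ord_p m p"
    and "1 < r" and "r < n - 1"
  shows "zariski_dense n (r - 1) (image_UT m n p)"
proof -
  have r0: "r \<noteq> 0" "r \<ge> 1" using assms(7) by auto
  have PI: "is_PI_UT m r p" and nPI: "\<not> is_PI_UT m (r+1) p"
    using ord_facts[OF assms(6) r0(1)] by auto
  have inf: "infinite (UNIV :: 'a set)" using alg_closed_infinite assms(1) by blast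
  have rn: "r + 2 \<le> n" using assms(8) by simp
  let ?S = "image_UT m n p"
  have S_sub: "?S \<subseteq> UT_t n (r-1)"
    using PI_image[OF assms(4) PI r0(2)] rn by (auto simp: image_UT_def)
  obtain a where a: "\<forall>k<m. a k \<in> UT (r+1)" "nc_eval (r+1) p a \<noteq> 0\<^sub>m (r+1) (r+1)"
    using nPI by (auto simp: is_PI_UT_def)
  have aUT: "nc_eval (r+1) p a \<in> UT_t (r+1) (r-1)"
    using PI_image[OF assms(4) PI r0(2) _ a(1)] by simp
  have a0r: "nc_eval (r+1) p a $$ (0,r) \<noteq> 0"
  proof -
    have "nc_eval (r+1) p a \<in> carrier_mat (r+1) (r+1)" by (simp add: nc_eval_def)
    then obtain x y where xy: "x < r+1" "y < r+1" "nc_eval (r+1) p a $$ (x,y) \<noteq> 0"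
      using nonzero_entry[OF _ a(2)] by blast
    then have "\<not> y \<le> x + (r-1)" using aUT by (auto simp: UT_t_def)
    then have "x = 0" "y = r" using xy by auto
    then show ?thesis using xy by simp
  qed
  define F where "F i us = nc_eval n p us $$ (i, i+r)" for i us
  have Fcpf: "cpf m n (F i)" if "i < n - r" for i
    unfolding cpf_def F_def
  proof (intro ballI allI impI)
    fix us :: "nat \<Rightarrow> 'a mat" and k a' b assume h: "us \<in> GG m n" "k < m" "a' \<le> b" "b < n"
    then show "pf (\<lambda>t. nc_eval n p (upd n us k a' b t) $$ (i,i+r))"
      using pf_nc_eval_entry[OF assms(4)] that by (auto simp: GG_def UT_def)
  qed
  have Fwit: "\<exists>x\<in>GG m n. F i x \<noteq> 0" if "i < n - r" for i
  proof -
    define us where "us k = (if k < m then emb n (r+1) i (a k) else 0\<^sub>m n n)" for k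
    have usG: "us \<in> GG m n" using a(1) by (auto simp: us_def GG_def emb_UT)
    have ir: "i + (r+1) \<le> n" using that by simp
    have "F i us = nc_eval n p us $$ (i+0, i+r)" by (simp add: F_def)
    also have "\<dots> = nc_eval (r+1) p (\<lambda>k. blk (r+1) i (us k)) $$ (0, r)"
      by (rule nc_eval_blk[OF assms(4) _ ir]) (use usG in \<open>auto simp: GG_def\<close>)
    also have "nc_eval (r+1) p (\<lambda>k. blk (r+1) i (us k)) = nc_eval (r+1) p a"
      by (rule nc_eval_cong[OF assms(4)]) (use a(1) ir in \<open>auto simp: us_def blk_emb UT_def\<close>)
    finally have "F i us \<noteq> 0" using a0r by simp
    then show ?thesis using usG by blast
  qed
  obtain z where z: "z \<in> GG m n" "\<forall>i<n-r. F i z \<noteq> 0"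
    using generic_point[OF inf, of "n - r" m n F] Fcpf Fwit by blast
  define x0 where "x0 = nc_eval n p z"
  have x0S: "x0 \<in> ?S" using z by (auto simp: x0_def image_UT_def GG_def)
  have x0N: "x0 \<in> Nset n r"
  proof -
    have "\<forall>i. i + r < n \<longrightarrow> x0 $$ (i, i + r) \<noteq> 0" using z(2) by (auto simp: x0_def F_def)
    then show ?thesis using x0S S_sub by (auto simp: Nset_def)
  qed
  have Scj: "B \<in> ?S" if SA: "A \<in> ?S" and cAB: "cj n A B" for A B
  proof -
    obtain us where us: "\<forall>k<m. us k \<in> UT n" "A = nc_eval n p us"
      using SA unfolding image_UT_def by blast
    obtain P Q where PQ: "P \<in> UT n" "Q \<in> UT n" "P * Q = 1\<^sub>m n" "Q * P = 1\<^sub>m n" "B = P * A * Q"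
      using cAB by (auto simp: cj_def)
    have "B = nc_eval n p (\<lambda>k. P * us k * Q)"
      using nc_eval_conj[OF assms(4), of us n P Q] us PQ by (auto simp: UT_def)
    moreover have "\<forall>k<m. P * us k * Q \<in> UT n" using UT_mult us PQ by blast
    ultimately show ?thesis by (auto simp: image_UT_def)
  qed
  have JS: "Jr n r \<in> ?S" using Scj[OF x0S cj_Jr[OF r0(2) x0N]] .
  have NS: "A \<in> ?S" if "A \<in> Nset n r" for A
  proof -
    have "A \<in> carrier_mat n n" using that by (auto simp: Nset_def UT_t_def)
    then have "cj n (Jr n r) A" using cj_sym[of A n "Jr n r"] cj_Jr[OF r0(2) that] by blast
    then show ?thesis using Scj JS by blast
  qed
  show ?thesis unfolding zariski_dense_def
  proof (intro conjI allI impI)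
    show "?S \<subseteq> UT_t n (r-1)" by (rule S_sub)
  next
    fix C assume C0: "zariski_closed n (r - 1) C \<and> ?S \<subseteq> C"
    then have C: "zariski_closed n (r - 1) C" "?S \<subseteq> C" by auto
    obtain FF where FF: "\<forall>f\<in>FF. cpoly_in n (r-1) f" "C = {A \<in> UT_t n (r-1). \<forall>f\<in>FF. cpoly_eval f A = 0}"
      using C(1) by (auto simp: zariski_closed_def)
    have "cpoly_eval f A = 0" if f: "f \<in> FF" and A: "A \<in> UT_t n (r-1)" for f A
    proof -
      have Q: "\<forall>A\<in>(UT_t n (r-1) :: 'a mat set). (\<forall>i. j \<le> i \<longrightarrow> i + r < n \<longrightarrow> A $$ (i,i+r) \<noteq> 0) \<longrightarrow> cpoly_eval f A = 0" for j
      proof (induction j)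
        case 0
        show ?case
        proof (intro ballI impI)
          fix A :: "'a mat" assume "A \<in> UT_t n (r-1)" "\<forall>i. 0 \<le> i \<longrightarrow> i + r < n \<longrightarrow> A $$ (i,i+r) \<noteq> 0"
          then have "A \<in> Nset n r" by (auto simp: Nset_def)
          then have "A \<in> C" using NS C(2) by blast
          then show "cpoly_eval f A = 0" using FF(2) f by blast
        qed
      next
        case (Suc j)
        show ?case
        proof (intro ballI impI)
          fix A :: "'a mat" assume A: "A \<in> UT_t n (r-1)" "\<forall>i. Suc j \<le> i \<longrightarrow> i + r < n \<longrightarrow> A $$ (i,i+r) \<noteq> 0"
          show "cpoly_eval f A = 0"
          proof (cases "j + r < n")
            case True
            let ?M = "\<lambda>s. mat n n (\<lambda>(x,y). if x = j \<and> y = j + r then s else A $$ (x,y))"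
            have cA: "A \<in> carrier_mat n n" using A by (auto simp: UT_t_def)
            have pfg: "pf (\<lambda>s. cpoly_eval f (?M s))"
              by (rule setE_pf[OF FF(1)[rule_format, OF f] cA]) (use True in auto)
            have "\<forall>s. s \<noteq> 0 \<longrightarrow> cpoly_eval f (?M s) = 0"
            proof (intro allI impI)
              fix s :: 'a assume s: "s \<noteq> 0"
              have "?M s \<in> UT_t n (r-1)" using A r0 by (auto simp: UT_t_def)
              moreover have "\<forall>i. j \<le> i \<longrightarrow> i + r < n \<longrightarrow> ?M s $$ (i,i+r) \<noteq> 0"
              proof (intro allI impI)
                fix i assume i: "j \<le> i" "i + r < n"
                show "?M s $$ (i,i+r) \<noteq> 0"
                proof (cases "i = j")
                  case True then show ?thesis using s i by simp
                next
                  case False then show ?thesis using A(2) i by auto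
                qed
              qed
              ultimately show "cpoly_eval f (?M s) = 0" using Suc.IH by blast
            qed
            then have "cpoly_eval f (?M (A $$ (j,j+r))) = 0" using pf_zero_extend[OF inf pfg] by blast
            moreover have "?M (A $$ (j,j+r)) = A" using cA by (intro eq_matI) auto
            ultimately show ?thesis by simp
          next
            case False
            have "\<forall>i. j \<le> i \<longrightarrow> i + r < n \<longrightarrow> A $$ (i,i+r) \<noteq> 0"
            proof (intro allI impI)
              fix i assume i: "j \<le> i" "i + r < n"
              then have "Suc j \<le> i" using False by (cases "i = j") auto
              then show "A $$ (i,i+r) \<noteq> 0" using A(2) i by blast
            qed
            then show ?thesis using Suc.IH A(1) by blast
          qed
        qed
      qed
      show ?thesis using Q[of n] A by auto
    qed
    then show "C = UT_t n (r-1)" using FF(2) by auto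
  qed
qed

end
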